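(* Let $p$ be an odd prime. For every integer $0<s<p-1$ we have $b_{1,s}(\alpha)=b_{1,p-1-s}(\alpha)$ in $\mathbb F_p[\alpha]$.
   Context: $\mathbb F_p$ is the field of $p$ elements, $\alpha$ an indeterminate, $\binom{x}{m}=x(x-1)\cdots(x-m+1)/m!$. For integers $0<r,s<p$ (interpreted as elements of $\mathbb F_p$), $b_{r,s}(\alpha)=\sum_{k=0}^{p-1}(-r/s)^k\binom{r\alpha-1}{p-1-k}\binom{s\alpha-1}{k}\in\mathbb F_p[\alpha]$. *)

theory Defs
  imports "Berlekamp_Zassenhaus.Finite_Field" "HOL-Computational_Algebra.Polynomial"
begin

text \<open>Binomial polynomial  binom(x, m) = x (x-1) ... (x-m+1) / m!  for a polynomial x
  over a field (used only for m < p, where m! is invertible in F_p).\<close>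
definition poly_binom :: "'a::field poly \<Rightarrow> nat \<Rightarrow> 'a poly" where
  "poly_binom x m = smult (inverse (of_nat (fact m))) (\<Prod>i<m. x - [:of_nat i:])"

text \<open>b_{r,s}(alpha) over F_p, where F_p = 'p mod_ring, p = CARD('p), alpha = [:0,1:].\<close>
definition b_poly :: "nat \<Rightarrow> nat \<Rightarrow> ('p::prime_card) mod_ring poly" where
  "b_poly r s = (\<Sum>k = 0..CARD('p) - 1.
     smult ((- (of_nat r / of_nat s)) ^ k)
       (poly_binom (smult (of_nat r) [:0, 1:] - 1) (CARD('p) - 1 - k)
        * poly_binom (smult (of_nat s) [:0, 1:] - 1) k))"

end

theory Submission
  imports Defs "Berlekamp_Zassenhaus.Berlekamp_Type_Based"
begin


lemma T1:
  fixes X Y t :: "'a::comm_ring_1"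
  shows "(\<Sum>k\<le>n. t^k * of_nat (n choose k) * pochhammer X (n-k) * pochhammer Y k)
       = (\<Sum>j\<le>n. (t-1)^j * of_nat (n choose j) * pochhammer Y j * pochhammer (X+Y+of_nat j) (n-j))"
proof -
  define h where "h j i = (t-1)^j * of_nat ((j+i) choose j) * of_nat (n choose (j+i)) * pochhammer X (n-(j+i)) * pochhammer Y (j+i)" for j i
  have L: "(\<Sum>k\<le>n. t^k * of_nat (n choose k) * pochhammer X (n-k) * pochhammer Y k)
     = (\<Sum>k\<le>n. \<Sum>j\<le>k. h j (k-j))"
  proof (rule sum.cong[OF refl])
    fix k assume "k \<in> {..n}"
    have "t^k = ((t-1)+1)^k" by simp
    also have "\<dots> = (\<Sum>j\<le>k. of_nat (k choose j) * (t-1)^j * 1^(k-j))" by (rule binomial_ring)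
    finally have "t^k = (\<Sum>j\<le>k. of_nat (k choose j) * (t-1)^j)" by simp
    then show "t^k * of_nat (n choose k) * pochhammer X (n-k) * pochhammer Y k = (\<Sum>j\<le>k. h j (k-j))"
      by (simp add: h_def sum_distrib_left sum_distrib_right mult_ac)
  qed
  have R: "(\<Sum>j\<le>n. (t-1)^j * of_nat (n choose j) * pochhammer Y j * pochhammer (X+Y+of_nat j) (n-j))
     = (\<Sum>j\<le>n. \<Sum>i\<le>n-j. h j i)"
  proof (rule sum.cong[OF refl])
    fix j assume j: "j \<in> {..n}"
    have "pochhammer (X+Y+of_nat j) (n-j) = pochhammer ((Y + of_nat j) + X) (n-j)" by (simp add: ac_simps)
    also have "\<dots> = (\<Sum>i\<le>n-j. of_nat ((n-j) choose i) * pochhammer (Y + of_nat j) i * pochhammer X (n - j - i))"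
      by (rule pochhammer_binomial_sum)
    finally have e: "pochhammer (X+Y+of_nat j) (n-j) = \<dots>" .
    have "(t-1)^j * of_nat (n choose j) * pochhammer Y j * (of_nat ((n-j) choose i) * pochhammer (Y + of_nat j) i * pochhammer X (n - j - i)) = h j i"
      if i: "i \<in> {..n-j}" for i
    proof -
      have c: "(n choose (j+i)) * ((j+i) choose j) = (n choose j) * ((n-j) choose i)"
        using choose_mult[of j "j+i" n] i j by auto
      have c': "(of_nat (n choose (j+i)) :: 'a) * of_nat ((j+i) choose j) = of_nat (n choose j) * of_nat ((n-j) choose i)"
        using arg_cong[OF c, of of_nat] by simp
      have p: "pochhammer Y j * pochhammer (Y + of_nat j) i = pochhammer Y (j+i)"
        by (rule pochhammer_product'[symmetric])
      show ?thesis unfolding h_def using c' p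
        by (simp add: algebra_simps) (metis (no_types, lifting) mult.assoc mult.commute)
    qed
    then show "(t-1)^j * of_nat (n choose j) * pochhammer Y j * pochhammer (X+Y+of_nat j) (n-j) = (\<Sum>i\<le>n-j. h j i)"
      unfolding e sum_distrib_left by (rule sum.cong[OF refl])
  qed
  have S: "(\<Sum>j\<le>n. \<Sum>i\<le>n-j. h j i) = (\<Sum>(j,i)\<in>{(j,i). j+i \<le> n}. h j i)"
  proof -
    have "(\<Sum>j\<le>n. \<Sum>i\<le>n-j. h j i) = (\<Sum>(j,i)\<in>Sigma {..n} (\<lambda>j. {..n-j}). h j i)"
      by (rule sum.Sigma) auto
    also have "Sigma {..n} (\<lambda>j. {..n-j}) = {(j,i). j+i \<le> n}" by auto
    finally show ?thesis .
  qed
  show ?thesis unfolding L R S sum.triangle_reindex_eq ..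
qed



lemma pascal_sum:
  fixes h :: "nat \<Rightarrow> nat \<Rightarrow> 'a::comm_ring_1"
  shows "(\<Sum>j\<le>Suc m. of_nat (Suc m choose j) * h j (Suc m - j))
       = (\<Sum>i\<le>m. of_nat (m choose i) * (h (Suc i) (m - i) + h i (Suc (m - i))))"
proof -
  have "(\<Sum>j\<le>Suc m. of_nat (Suc m choose j) * h j (Suc m - j))
      = h 0 (Suc m) + (\<Sum>i\<le>m. of_nat (Suc m choose Suc i) * h (Suc i) (m - i))"
    by (subst sum.atMost_Suc_shift) simp
  also have "\<dots> = h 0 (Suc m) + (\<Sum>i\<le>m. of_nat (m choose i) * h (Suc i) (m - i))
                 + (\<Sum>i\<le>m. of_nat (m choose Suc i) * h (Suc i) (m - i))"
    by (simp add: sum.distrib algebra_simps)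
  moreover have "h 0 (Suc m) + (\<Sum>i\<le>m. of_nat (m choose Suc i) * h (Suc i) (m - i))
      = (\<Sum>i\<le>m. of_nat (m choose i) * h i (Suc (m - i)))"
  proof -
    have "(\<Sum>i\<le>Suc m. of_nat (m choose i) * h i (Suc (m - i)))
       = h 0 (Suc m) + (\<Sum>i\<le>m. of_nat (m choose Suc i) * h (Suc i) (Suc (m - Suc i)))"
      by (subst sum.atMost_Suc_shift) simp
    also have "(\<Sum>i\<le>m. of_nat (m choose Suc i) * h (Suc i) (Suc (m - Suc i)))
        = (\<Sum>i\<le>m. of_nat (m choose Suc i) * h (Suc i) (m - i))"
    proof (rule sum.cong[OF refl])
      fix i assume "i \<in> {..m}"
      then consider "i < m" | "i = m" by fastforce
      then show "of_nat (m choose Suc i) * h (Suc i) (Suc (m - Suc i)) = of_nat (m choose Suc i) * h (Suc i) (m - i)"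
        by cases (simp_all add: Suc_diff_Suc binomial_eq_0)
    qed
    finally show ?thesis by (simp add: binomial_eq_0)
  qed
  ultimately show ?thesis by (simp add: sum.distrib algebra_simps)
qed

lemma Dpascal:
  fixes U V c :: "'a::comm_ring_1"
  shows "(\<Sum>j\<le>Suc m. of_nat (Suc m choose j) * (c^j * pochhammer U j * pochhammer V (Suc m - j)))
    = (\<Sum>i\<le>m. of_nat (m choose i) * (c^i * pochhammer U i * pochhammer V (m-i)
          * (c*(U + of_nat i) + (V + of_nat (m-i)))))"
  unfolding pascal_sum[of m "\<lambda>j k. c^j * pochhammer U j * pochhammer V k"]
  by (rule sum.cong[OF refl]) (simp add: pochhammer_Suc algebra_simps)

lemma swap_sum:
  fixes X Y t u :: "'a::comm_ring_1"
  assumes "t * u = 1" "t ^ n = 1"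
  shows "(\<Sum>k\<le>n. t^k * of_nat (n choose k) * pochhammer X (n-k) * pochhammer Y k)
       = (\<Sum>k\<le>n. u^k * of_nat (n choose k) * pochhammer Y (n-k) * pochhammer X k)"
proof (rule sum.reindex_bij_witness[where i="\<lambda>k. n - k" and j="\<lambda>k. n - k"])
  fix k assume k: "k \<in> {..n}"
  have "t^k = t^k * (t*u)^(n-k)" using assms by simp
  also have "\<dots> = t^(k + (n-k)) * u^(n-k)" by (simp add: power_mult_distrib power_add)
  also have "\<dots> = u^(n-k)" using k assms by simp
  finally have "t^k = u^(n-k)" .
  then show "u ^ (n - k) * of_nat (n choose (n - k)) * pochhammer Y (n - (n - k)) * pochhammer X (n - k) =
         t ^ k * of_nat (n choose k) * pochhammer X (n - k) * pochhammer Y k"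
    using k by (simp add: binomial_symmetric[symmetric] mult_ac)
qed auto



lemma of_nat_fact_nz:
  assumes "m < CARD('p::prime_card)"
  shows "(of_nat (fact m) :: 'p mod_ring) \<noteq> 0"
proof
  assume "(of_nat (fact m) :: 'p mod_ring) = 0"
  then have "CARD('p) dvd fact m" by (rule of_nat_0_mod_ring_dvd)
  then have "CARD('p) \<le> m" using prime_dvd_fact_iff[OF prime_card] by blast
  with assms show False by simp
qed

lemma of_nat_dvd_zero:
  assumes "CARD('p::prime_card) dvd n"
  shows "(of_nat n :: 'p mod_ring) = 0"
proof -
  obtain k where "n = CARD('p) * k" using assms by blast
  then show ?thesis by simp
qed

lemma of_nat_bij: "bij_betw (of_nat :: nat \<Rightarrow> 'p::prime_card mod_ring) {..<CARD('p)} UNIV"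
proof -
  have inj: "inj_on (of_nat :: nat \<Rightarrow> 'p mod_ring) {..<CARD('p)}"
  proof (rule inj_onI)
    fix i j assume i: "i \<in> {..<CARD('p)}" and j: "j \<in> {..<CARD('p)}"
      and e: "(of_nat i :: 'p mod_ring) = of_nat j"
    show "i = j"
    proof (rule ccontr)
      assume "i \<noteq> j"
      then consider "i < j" | "j < i" by linarith
      then show False
      proof cases
        case 1
        then have "(of_nat (j - i) :: 'p mod_ring) = 0" using e by (simp add: of_nat_diff)
        then have "CARD('p) dvd (j - i)" by (rule of_nat_0_mod_ring_dvd)
        then show False using 1 j by (auto dest: dvd_imp_le)
      next
        case 2
        then have "(of_nat (i - j) :: 'p mod_ring) = 0" using e by (simp add: of_nat_diff)
        then have "CARD('p) dvd (i - j)" by (rule of_nat_0_mod_ring_dvd)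
        then show False using 2 i by (auto dest: dvd_imp_le)
      qed
    qed
  qed
  have "of_nat ` {..<CARD('p)} = (UNIV :: 'p mod_ring set)"
    using surj_of_nat_mod_ring by fastforce
  with inj show ?thesis by (simp add: bij_betw_def)
qed

lemma poch_card:
  fixes z :: "'p::prime_card mod_ring poly"
  shows "pochhammer z CARD('p) = (\<Prod>a\<in>UNIV. z + [:a:])"
proof -
  have "pochhammer z CARD('p) = (\<Prod>i<CARD('p). z + [:of_nat i:])"
    by (simp add: pochhammer_prod of_nat_poly atLeast0LessThan)
  also have "\<dots> = (\<Prod>a\<in>UNIV. z + [:a:])"
    using prod.reindex_bij_betw[OF of_nat_bij, of "\<lambda>a. z + [:a:]"] by simp
  finally show ?thesis .
qed

lemma poch_lin:
  fixes x :: "'p::prime_card mod_ring poly"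
  assumes c: "c \<noteq> 0"
  shows "pochhammer (smult c x + [:d:]) CARD('p) = smult c (\<Prod>a\<in>UNIV. x + [:a:])"
proof -
  have "pochhammer (smult c x + [:d:]) CARD('p) = (\<Prod>a\<in>UNIV. smult c x + [:d:] + [:a:])"
    by (rule poch_card)
  also have "\<dots> = (\<Prod>a\<in>UNIV. smult c (x + [:(d + a) / c:]))"
    using c by (intro prod.cong refl) (simp add: smult_add_right)
  also have "\<dots> = smult (c ^ CARD('p)) (\<Prod>a\<in>UNIV. x + [:(d + a) / c:])"
    by (simp add: prod_smult)
  also have "(\<Prod>a\<in>UNIV. x + [:(d + a) / c:]) = (\<Prod>a\<in>UNIV. x + [:a:])"
    by (rule prod.reindex_bij_witness[where i="\<lambda>a. c * a - d" and j="\<lambda>a. (d + a) / c"])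
       (use c in auto)
  finally show ?thesis by simp
qed

lemma choose_card_zero:
  assumes "0 < j" "j < CARD('p::prime_card)"
  shows "(of_nat (CARD('p) choose j) :: 'p mod_ring poly) = 0"
proof -
  have "CARD('p) dvd (CARD('p) choose j)"
    using dvd_choose_prime[OF assms(2)] assms prime_card by auto
  then show ?thesis by (simp add: of_nat_poly of_nat_dvd_zero)
qed



lemma of_nat_card_poly: "(of_nat CARD('p::prime_card) :: 'p mod_ring poly) = 0"
  by (simp add: of_nat_poly)

lemma of_nat_N_poly: "(of_nat (CARD('p::prime_card) - 1) :: 'p mod_ring poly) = -1"
proof -
  have "CARD('p) = Suc (CARD('p) - 1)" using prime_card[where 'a='p] prime_gt_0_nat by simp
  then have "(of_nat (CARD('p) - 1) :: 'p mod_ring poly) + 1 = of_nat CARD('p)"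
    by (metis of_nat_Suc add.commute)
  then show ?thesis using of_nat_card_poly[where 'p='p] by (simp add: eq_neg_iff_add_eq_0)
qed

lemma Dp_zero:
  assumes c: "(c :: 'p::prime_card mod_ring) \<noteq> 0"
  shows "(\<Sum>j\<le>CARD('p). of_nat (CARD('p) choose j) *
     ([:c:]^j * pochhammer (1 - [:0,1:]) j * pochhammer (smult c [:0,1:]) (CARD('p) - j))) = 0"
proof -
  let ?p = "CARD('p)"
  let ?f = "\<lambda>j. (of_nat (?p choose j) :: 'p mod_ring poly) *
     ([:c:]^j * pochhammer (1 - [:0,1:]) j * pochhammer (smult c [:0,1:]) (?p - j))"
  define Q where "Q = (\<Prod>a\<in>UNIV. [:0,1:] + [:a::'p mod_ring:])"
  have "sum ?f {..?p} = sum ?f {0, ?p}"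
  proof (rule sum.mono_neutral_right)
    show "\<forall>i\<in>{..?p} - {0, ?p}. ?f i = 0"
    proof
      fix i assume "i \<in> {..?p} - {0, ?p}"
      then have "0 < i" "i < ?p" by auto
      then show "?f i = 0" by (simp only: choose_card_zero mult_zero_left)
    qed
  qed auto
  also have "\<dots> = ?f 0 + ?f ?p" using prime_card[where 'a='p] prime_gt_0_nat by simp
  also have "?f 0 = smult c Q"
    using poch_lin[OF c, of "[:0,1:]" 0] by (simp add: Q_def)
  also have "?f ?p = [:c:]^?p * pochhammer (smult (-1) [:0,1:] + [:1:]) ?p"
  proof -
    have e: "(1::'p mod_ring poly) - [:0,1:] = smult (-1) [:0,1:] + [:1:]"
      by (simp only: pCons_one smult_minus_left smult_1_left) simp
    show ?thesis unfolding e[symmetric] by simp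
  qed
  also have "\<dots> = [:c:] * smult (-1) Q"
  proof -
    have "[:c:]^?p = [:c:]" by (simp only: poly_const_pow fermat_theorem_mod_ring)
    moreover have "pochhammer (smult (-1) [:0,1:] + [:1:]) ?p = smult (-1) Q"
      using poch_lin[of "-1 :: 'p mod_ring" "[:0,1:]" 1] by (simp only: Q_def) simp
    ultimately show ?thesis by simp
  qed
  finally show ?thesis by simp
qed

lemma W_eq:
  fixes c :: "'p::prime_card mod_ring"
  assumes c0: "c \<noteq> 0" and c1: "c \<noteq> 1" and pN: "CARD('p) = Suc N"
  shows "(\<Sum>i\<le>N. [:c:]^i * of_nat (N choose i) * pochhammer (1 - [:0,1:]) i * pochhammer (smult c [:0,1:]) (N-i))
       = (\<Sum>i\<le>N. [:c:]^i * of_nat (N choose i) * pochhammer (1 - [:0,1:]) i * pochhammer (1 + smult c [:0,1:]) (N-i))"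
    (is "?L = ?R")
proof -
  define U :: "'p mod_ring poly" where "U = 1 - [:0,1:]"
  define V :: "'p mod_ring poly" where "V = smult c [:0,1:]"
  define t where "t i = of_nat (N choose i) * ([:c:]^i * pochhammer U i * pochhammer V (N-i))" for i
  have ND: "(of_nat N :: 'p mod_ring poly) = -1"
    using of_nat_N_poly[where 'p='p] pN by simp
  have D: "(\<Sum>i\<le>N. t i * ([:c:]*(U + of_nat i) + (V + of_nat(N-i)))) = 0"
    using Dpascal[of N "[:c:]" U V] Dp_zero[OF c0] pN
    by (simp add: t_def U_def V_def mult.assoc)
  have cm1: "[:c - 1:] = [:c:] - (1 :: 'p mod_ring poly)"
    by (simp only: pCons_one[symmetric] diff_pCons) simp
  have e1: "[:c:]*(U + of_nat i) + (V + of_nat(N-i)) = [:c-1:] * (1 + of_nat i)" if "i \<le> N" for i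
  proof -
    have "(of_nat (N - i) :: 'p mod_ring poly) = of_nat N - of_nat i" using that by (simp add: of_nat_diff)
    then have n: "(of_nat (N - i) :: 'p mod_ring poly) = - 1 - of_nat i" using ND by simp
    have cv: "[:c:] * [:0,1:] = smult c [:0,1:]" by simp
    show ?thesis unfolding cm1 n U_def V_def
      by (simp add: algebra_simps cv)
  qed
  have e2: "V * pochhammer (1 + V) n = pochhammer V n * (V + of_nat n)" for n
    using pochhammer_rec[of V n] pochhammer_Suc[of V n] by (simp add: add.commute)
  have "V * (?R - ?L) = (\<Sum>i\<le>N. t i * of_nat (N - i))"
    unfolding sum_subtractf[symmetric] sum_distrib_left
  proof (rule sum.cong[OF refl])
    fix i assume "i \<in> {..N}"
    have "V * ([:c:]^i * of_nat (N choose i) * pochhammer (1 - [:0,1:]) i * pochhammer (1 + smult c [:0,1:]) (N-i))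
        = of_nat (N choose i) * [:c:]^i * pochhammer U i * (V * pochhammer (1 + V) (N-i))"
      by (simp add: U_def V_def mult_ac)
    also have "\<dots> = t i * (V + of_nat (N - i))" unfolding e2 t_def by (simp add: mult_ac)
    finally show "V * ([:c:]^i * of_nat (N choose i) * pochhammer (1 - [:0,1:]) i * pochhammer (1 + smult c [:0,1:]) (N-i)
      - [:c:]^i * of_nat (N choose i) * pochhammer (1 - [:0,1:]) i * pochhammer (smult c [:0,1:]) (N-i))
      = t i * of_nat (N - i)"
      by (simp add: t_def U_def V_def algebra_simps)
  qed
  also have "\<dots> = - (\<Sum>i\<le>N. t i * (1 + of_nat i))"
    unfolding sum_negf[symmetric]
  proof (rule sum.cong[OF refl])
    fix i assume "i \<in> {..N}"
    then have "(of_nat (N - i) :: 'p mod_ring poly) = of_nat N - of_nat i" by (simp add: of_nat_diff)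
    then have n: "(of_nat (N - i) :: 'p mod_ring poly) = - 1 - of_nat i" using ND by simp
    show "t i * of_nat (N - i) = - (t i * (1 + of_nat i))" unfolding n by (simp add: algebra_simps)
  qed
  finally have X: "V * (?R - ?L) = - (\<Sum>i\<le>N. t i * (1 + of_nat i))" .
  have "[:c-1:] * (\<Sum>i\<le>N. t i * (1 + of_nat i)) = 0"
    using D e1 unfolding sum_distrib_left by (simp add: mult_ac)
  moreover have "[:c-1:] \<noteq> (0 :: 'p mod_ring poly)" using c1 by simp
  ultimately have "(\<Sum>i\<le>N. t i * (1 + of_nat i)) = 0" by simp
  with X have "V * (?R - ?L) = 0" by simp
  moreover have "V \<noteq> 0" using c0 by (simp add: V_def)
  ultimately show ?thesis by simp
qed



lemma smult_sum_right: "smult a (sum f A) = (\<Sum>x\<in>A. smult a (f x))"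
  by (induct A rule: infinite_finite_induct) (simp_all add: smult_add_right)

lemma pb_poch:
  "poly_binom (x :: 'a::field poly) m = smult (inverse (of_nat (fact m)) * (-1)^m) (pochhammer (-x) m)"
proof -
  have "pochhammer (-x) m = (\<Prod>i<m. - (x - [:of_nat i:]))"
    by (simp add: pochhammer_prod atLeast0LessThan of_nat_poly)
  also have "\<dots> = (-1)^m * (\<Prod>i<m. x - [:of_nat i:])"
    by (simp only: prod_uminus card_lessThan)
  finally have "(\<Prod>i<m. x - [:of_nat i:]) = (-1)^m * pochhammer (-x) m"
    by (simp add: algebra_simps)
  moreover have "((-1)^m :: 'a poly) = [:(-1)^m:]"
  proof -
    have "[:-1:] = (-1::'a poly)" by (simp only: pCons_one[symmetric] minus_pCons) simp
    then show ?thesis by (metis poly_const_pow)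
  qed
  ultimately show ?thesis unfolding poly_binom_def by simp
qed

lemma fact_inv:
  assumes "k \<le> N" "N < CARD('p::prime_card)"
  shows "inverse (of_nat (fact (N-k)) :: 'p mod_ring) * inverse (of_nat (fact k))
       = inverse (of_nat (fact N)) * of_nat (N choose k)"
proof -
  have e: "(of_nat (fact N) :: 'p mod_ring) = of_nat (fact k) * of_nat (fact (N-k)) * of_nat (N choose k)"
    using arg_cong[OF binomial_fact_lemma[OF assms(1)], of "of_nat :: nat \<Rightarrow> 'p mod_ring"]
    by simp
  have "(of_nat (fact k) :: 'p mod_ring) \<noteq> 0" "(of_nat (fact (N-k)) :: 'p mod_ring) \<noteq> 0"
    using of_nat_fact_nz[where 'p='p, of k] of_nat_fact_nz[where 'p='p, of "N-k"] assms by auto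
  moreover have "(of_nat (fact N) :: 'p mod_ring) \<noteq> 0"
    using of_nat_fact_nz[where 'p='p, of N] assms by auto
  ultimately have "(of_nat (N choose k) :: 'p mod_ring) \<noteq> 0" using e by auto
  with \<open>(of_nat (fact k) :: 'p mod_ring) \<noteq> 0\<close> \<open>(of_nat (fact (N-k)) :: 'p mod_ring) \<noteq> 0\<close>
  show ?thesis unfolding e by (simp add: field_simps)
qed

definition SS :: "nat \<Rightarrow> 'a::comm_ring_1 \<Rightarrow> 'a \<Rightarrow> 'a \<Rightarrow> 'a" where
  "SS n X Y t = (\<Sum>k\<le>n. t^k * of_nat (n choose k) * pochhammer X (n-k) * pochhammer Y k)"

lemma BP:
  fixes s :: nat
  assumes pN: "CARD('p::prime_card) = Suc N" and ev: "even N"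
  shows "(b_poly 1 s :: 'p mod_ring poly) = smult (inverse (of_nat (fact N)))
     (SS N (1 - [:0,1:]) (1 - smult (of_nat s) [:0,1:]) [:-(1 / of_nat s):])"
proof -
  let ?t = "-(1 / (of_nat s :: 'p mod_ring))"
  have "b_poly 1 s = (\<Sum>k\<le>N. smult (?t ^ k)
       (poly_binom ([:0,1:] - 1) (N - k) * poly_binom (smult (of_nat s) [:0, 1:] - 1) k) :: 'p mod_ring poly)"
    unfolding b_poly_def pN by (simp add: atLeast0AtMost)
  also have "\<dots> = (\<Sum>k\<le>N. smult (inverse (of_nat (fact N)))
     ([:?t:]^k * of_nat (N choose k) * pochhammer (1 - [:0,1:]) (N-k) * pochhammer (1 - smult (of_nat s) [:0,1:]) k))"
  proof (rule sum.cong[OF refl])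
    fix k assume k: "k \<in> {..N}"
    have sg: "((-1::'p mod_ring) ^ (N - k)) * (-1) ^ k = 1"
      using k ev by (simp add: power_add[symmetric])
    have fi: "inverse (of_nat (fact (N-k)) :: 'p mod_ring) * inverse (of_nat (fact k))
       = inverse (of_nat (fact N)) * of_nat (N choose k)"
      using fact_inv[where 'p='p, of k N] k pN by auto
    have co: "inverse (of_nat (fact (N - k))) * (- 1) ^ (N - k) * (inverse (of_nat (fact k)) * (- 1) ^ k)
        = inverse (of_nat (fact N)) * (of_nat (N choose k) :: 'p mod_ring)"
      using sg fi by (simp add: mult_ac)
    have "smult (?t ^ k) (poly_binom ([:0,1:] - 1) (N - k) * poly_binom (smult (of_nat s) [:0, 1:] - 1) k)
      = smult (?t ^ k * (inverse (of_nat (fact (N - k))) * (- 1) ^ (N - k) * (inverse (of_nat (fact k)) * (- 1) ^ k)))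
          (pochhammer (1 - [:0,1:]) (N-k) * pochhammer (1 - smult (of_nat s) [:0,1:]) k)"
      unfolding pb_poch by (simp add: mult_ac)
    also have "\<dots> = smult (?t ^ k * (inverse (of_nat (fact N)) * of_nat (N choose k)))
          (pochhammer (1 - [:0,1:]) (N-k) * pochhammer (1 - smult (of_nat s) [:0,1:]) k)"
      unfolding co ..
    also have "\<dots> = smult (inverse (of_nat (fact N)))
     ([:?t:]^k * of_nat (N choose k) * pochhammer (1 - [:0,1:]) (N-k) * pochhammer (1 - smult (of_nat s) [:0,1:]) k)"
      by (simp add: poly_const_pow of_nat_poly mult_ac)
    finally show "smult (?t ^ k) (poly_binom ([:0,1:] - 1) (N - k) * poly_binom (smult (of_nat s) [:0, 1:] - 1) k)
      = smult (inverse (of_nat (fact N)))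
     ([:?t:]^k * of_nat (N choose k) * pochhammer (1 - [:0,1:]) (N-k) * pochhammer (1 - smult (of_nat s) [:0,1:]) k)" .
  qed
  also have "\<dots> = smult (inverse (of_nat (fact N))) (SS N (1 - [:0,1:]) (1 - smult (of_nat s) [:0,1:]) [:?t:])"
    unfolding SS_def smult_sum_right ..
  finally show ?thesis .
qed


lemma fermat_N:
  assumes "(x :: 'p::prime_card mod_ring) \<noteq> 0" "CARD('p) = Suc N"
  shows "x ^ N = 1"
proof -
  have "x * x ^ N = x * 1" using fermat_theorem_mod_ring[of x] assms(2) by simp
  then show ?thesis using assms(1) by simp
qed

lemma nat_nz:
  assumes "0 < n" "n < CARD('p::prime_card)"
  shows "(of_nat n :: 'p mod_ring) \<noteq> 0"
proof
  assume "(of_nat n :: 'p mod_ring) = 0"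
  then have "CARD('p) dvd n" by (rule of_nat_0_mod_ring_dvd)
  with assms show False by (auto dest: dvd_imp_le)
qed

theorem corollary14:
  fixes s :: nat
  assumes "odd (CARD('p::prime_card))"
    and "0 < s" and "s < CARD('p) - 1"
  shows "(b_poly 1 s :: 'p mod_ring poly) = b_poly 1 (CARD('p) - 1 - s)"
proof -
  define N where "N = CARD('p) - 1"
  have pN: "CARD('p) = Suc N" unfolding N_def using prime_card[where 'a='p] prime_gt_0_nat by simp
  have ev: "even N" using assms(1) pN by simp
  define s0 where "s0 = (of_nat s :: 'p mod_ring)"
  define c where "c = 1 + s0"
  have s0nz: "s0 \<noteq> 0" unfolding s0_def using nat_nz[where 'p='p, of s] assms by simp
  have cnz: "c \<noteq> 0" unfolding c_def s0_def using nat_nz[where 'p='p, of "Suc s"] assms by simp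
  have c1: "c \<noteq> 1" unfolding c_def using s0nz by simp
  have s1: "(of_nat (CARD('p) - 1 - s) :: 'p mod_ring) = - c"
  proof -
    have "(of_nat (CARD('p) - 1 - s) :: 'p mod_ring) + of_nat (Suc s) = of_nat CARD('p)"
      using assms(3) by (simp only: of_nat_add[symmetric]) simp
    then have h: "(of_nat (CARD('p) - 1 - s) :: 'p mod_ring) + (1 + s0) = 0"
      unfolding s0_def by simp
    have "(of_nat (CARD('p) - 1 - s) :: 'p mod_ring) = ((of_nat (CARD('p) - 1 - s) :: 'p mod_ring) + (1 + s0)) - (1 + s0)"
      by simp
    then show ?thesis unfolding h c_def by simp
  qed
  have ND: "(of_nat N :: 'p mod_ring poly) = -1" unfolding N_def by (rule of_nat_N_poly)
  let ?a = "[:0,1:] :: 'p mod_ring poly"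
  define WL where "WL = (\<Sum>i\<le>N. [:c:]^i * of_nat (N choose i) * pochhammer (1 - ?a) i * pochhammer (smult c ?a) (N-i))"
  define WR where "WR = (\<Sum>i\<le>N. [:c:]^i * of_nat (N choose i) * pochhammer (1 - ?a) i * pochhammer (1 + smult c ?a) (N-i))"
  have WLR: "WL = WR" unfolding WL_def WR_def by (rule W_eq[OF cnz c1 pN])
  have A: "b_poly 1 s = smult (inverse (of_nat (fact N))) (SS N (1 - ?a) (1 - smult s0 ?a) [:-(1 / s0):])"
    unfolding s0_def by (rule BP[OF pN ev])
  have sA: "SS N (1 - ?a) (1 - smult s0 ?a) [:-(1 / s0):] = SS N (1 - smult s0 ?a) (1 - ?a) [:-s0:]"
    unfolding SS_def
  proof (rule swap_sum)
    show "[:- (1 / s0):] * [:- s0:] = 1" using s0nz by (simp add: pCons_one)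
    show "[:- (1 / s0):] ^ N = 1" using fermat_N[of "-(1/s0)" N] s0nz pN by (simp add: poly_const_pow pCons_one)
  qed
  also have "\<dots> = (\<Sum>j\<le>N. ([:-s0:]-1)^j * of_nat (N choose j) * pochhammer (1 - ?a) j
        * pochhammer ((1 - smult s0 ?a) + (1 - ?a) + of_nat j) (N-j))"
    unfolding SS_def by (rule T1)
  also have "\<dots> = WL" unfolding WL_def
  proof (rule sum.cong[OF refl])
    fix j assume j: "j \<in> {..N}"
    have m1: "[:-s0:] - 1 = - [:c:]"
    proof -
      have "[:1 + s0:] = [:1:] + [:s0:]" by (simp only: add_pCons add_0_right)
      then have "[:c:] = 1 + [:s0:]" unfolding c_def pCons_one .
      moreover have "[:-s0:] = - [:s0:]" by simp
      ultimately show ?thesis by simp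
    qed
    have nj: "(of_nat (N - j) :: 'p mod_ring poly) = - 1 - of_nat j"
      using j ND by (simp add: of_nat_diff)
    have sc: "smult c ?a = ?a + smult s0 ?a" unfolding c_def by (simp only: smult_add_left smult_1_left)
    have arg: "(1 - smult s0 ?a) + (1 - ?a) + of_nat j = - (smult c ?a) - of_nat (N - j) + 1"
      unfolding nj sc by (simp add: algebra_simps)
    have P: "pochhammer ((1 - smult s0 ?a) + (1 - ?a) + of_nat j) (N-j) = (-1)^(N-j) * pochhammer (smult c ?a) (N-j)"
      unfolding arg using pochhammer_minus'[of "- (smult c ?a)" "N-j"] by simp
    have sg: "((-1) :: 'p mod_ring poly)^j * (-1)^(N-j) = 1"
      using j ev by (simp add: power_add[symmetric])
    show "([:-s0:]-1)^j * of_nat (N choose j) * pochhammer (1 - ?a) j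
        * pochhammer ((1 - smult s0 ?a) + (1 - ?a) + of_nat j) (N-j)
        = [:c:]^j * of_nat (N choose j) * pochhammer (1 - ?a) j * pochhammer (smult c ?a) (N-j)"
      unfolding P m1 power_minus[of "[:c:]" j]
    proof -
      have "(- 1) ^ j * [:c:] ^ j * of_nat (N choose j) * pochhammer (1 - ?a) j *
        ((- 1) ^ (N - j) * pochhammer (smult c ?a) (N - j))
        = ((-1)^j * (-1)^(N-j)) * ([:c:] ^ j * of_nat (N choose j) * pochhammer (1 - ?a) j *
        pochhammer (smult c ?a) (N - j))" by (simp only: mult_ac)
      then show "(- 1) ^ j * [:c:] ^ j * of_nat (N choose j) * pochhammer (1 - ?a) j *
        ((- 1) ^ (N - j) * pochhammer (smult c ?a) (N - j)) =
        [:c:] ^ j * of_nat (N choose j) * pochhammer (1 - ?a) j * pochhammer (smult c ?a) (N - j)"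
        unfolding sg by simp
    qed
  qed
  finally have AW: "SS N (1 - ?a) (1 - smult s0 ?a) [:-(1 / s0):] = WL" .
  have B: "b_poly 1 (CARD('p) - 1 - s) = smult (inverse (of_nat (fact N))) (SS N (1 - ?a) (1 - smult (-c) ?a) [:-(1 / (-c)):])"
    using BP[OF pN ev, of "CARD('p) - 1 - s"] unfolding s1 .
  have "SS N (1 - ?a) (1 - smult (-c) ?a) [:-(1 / (-c)):] = SS N (1 - smult (-c) ?a) (1 - ?a) [:c:]"
    unfolding SS_def
  proof (rule swap_sum)
    show "[:- (1 / - c):] * [:c:] = 1" using cnz by (simp add: pCons_one)
    show "[:- (1 / - c):] ^ N = 1" using fermat_N[of "1/c" N] cnz pN by (simp add: poly_const_pow pCons_one)
  qed
  also have "\<dots> = WR"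
  proof -
    have e: "1 - smult (-c) ?a = 1 + smult c ?a" by (simp only: smult_minus_left diff_minus_eq_add)
    show ?thesis unfolding SS_def WR_def e
      by (rule sum.cong[OF refl]) (simp only: mult_ac)
  qed
  finally have BW: "SS N (1 - ?a) (1 - smult (-c) ?a) [:-(1 / (-c)):] = WR" .
  show ?thesis unfolding A B AW BW WLR ..
qed


end
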